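(* The Shapley–Shubik index satisfies the strong minimum-power blocker postulate. For every SVG $\mathcal{G}=(N,\mathcal{W})$: (1) if $S\in\mathcal{W}$ and $b\in S$ is a YES-blocker, then $SS_b\ge 1/|S|$; (2) if $T\notin\mathcal{W}$ and $b\in N\setminus T$ is a NO-blocker, then $SS_b\ge 1/|N\setminus T|$. (Here $1$ is the Shapley–Shubik index of a dictator in a dictator-rule game.)
   Context: A simple voting game (SVG) is a pair $\mathcal{G}=(N,\mathcal{W})$ with $N$ a nonempty finite set of $n$ players and $\mathcal{W}\subseteq 2^N$ monotone, $\emptyset\notin\mathcal{W}$, $N\in\mathcal{W}$. Player $k$ is YES-decisive in $S$ if $k\in S\in\mathcal{W}$ and $S\setminus\{k\}\notin\mathcal{W}$. The Shapley–Shubik index is $$SS_k=\sum_{S:\ k\text{ YES-decisive in }S}\frac{(|S|-1)!\,(n-|S|)!}{n!}.$$ Blockers: $b$ is a YES-blocker if $b\in S$ for all $S\in\mathcal{W}$, and a NO-blocker if $b\notin S$ for all $S\notin\mathcal{W}$. *)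

theory Defs
  imports Complex_Main
begin

definition svg :: "'a set \<Rightarrow> 'a set set \<Rightarrow> bool" where
  "svg N W \<longleftrightarrow> finite N \<and> N \<noteq> {} \<and> W \<subseteq> Pow N \<and>
     (\<forall>S T. S \<in> W \<and> S \<subseteq> T \<and> T \<subseteq> N \<longrightarrow> T \<in> W) \<and>
     {} \<notin> W \<and> N \<in> W"

definition yes_decisive :: "'a set set \<Rightarrow> 'a \<Rightarrow> 'a set \<Rightarrow> bool" where
  "yes_decisive W k S \<longleftrightarrow> k \<in> S \<and> S \<in> W \<and> S - {k} \<notin> W"

definition shapley_shubik :: "'a set \<Rightarrow> 'a set set \<Rightarrow> 'a \<Rightarrow> real" where
  "shapley_shubik N W k =
     (\<Sum>S \<in> {S. S \<subseteq> N \<and> yes_decisive W k S}.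
        fact (card S - 1) * fact (card N - card S) / fact (card N))"

definition yes_blocker :: "'a set set \<Rightarrow> 'a \<Rightarrow> bool" where
  "yes_blocker W b \<longleftrightarrow> (\<forall>S \<in> W. b \<in> S)"

definition no_blocker :: "'a set \<Rightarrow> 'a set set \<Rightarrow> 'a \<Rightarrow> bool" where
  "no_blocker N W b \<longleftrightarrow> (\<forall>S. S \<subseteq> N \<and> S \<notin> W \<longrightarrow> b \<notin> S)"

end

theory Submission imports Defs begin

lemma idA': "(\<Sum>k\<le>q. fact q / fact k * fact (r+k) :: real) = fact (q+r+1) / real (r+1)"
proof (induction q)
  case 0 then show ?case by (simp add: field_simps)
next
  case (Suc q)
  have "(\<Sum>k\<le>Suc q. fact (Suc q) / fact k * fact (r+k) :: real)
     = (\<Sum>k\<le>q. real (Suc q) * (fact q / fact k * fact (r+k))) + fact (r + Suc q)"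
  proof -
    have "(\<Sum>k\<le>Suc q. fact (Suc q) / fact k * fact (r+k) :: real)
      = (\<Sum>k\<le>q. fact (Suc q) / fact k * fact (r+k)) + fact (Suc q) / fact (Suc q) * fact (r + Suc q)"
      by (rule sum.atMost_Suc)
    moreover have "(\<Sum>k\<le>q. fact (Suc q) / fact k * fact (r+k) :: real) = (\<Sum>k\<le>q. real (Suc q) * (fact q / fact k * fact (r+k)))"
      by (rule sum.cong) (simp_all add: fact_Suc[of q])
    ultimately show ?thesis by simp
  qed
  also have "\<dots> = real (Suc q) * (fact (q+r+1) / real (r+1)) + fact (r + Suc q)"
    by (subst sum_distrib_left[symmetric]) (simp only: Suc)
  also have "\<dots> = fact (Suc q + r + 1) / real (r+1)"
    by (simp add: field_simps fact_Suc add.commute add.left_commute)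
  finally show ?case .
qed

lemma idA: "(\<Sum>k\<le>q. real (q choose k) * fact (r+k) * fact (q-k) :: real) = fact (q+r+1) / real (r+1)"
proof -
  have "(\<Sum>k\<le>q. real (q choose k) * fact (r+k) * fact (q-k) :: real) = (\<Sum>k\<le>q. fact q / fact k * fact (r+k))"
    by (rule sum.cong) (auto simp: binomial_fact field_simps)
  then show ?thesis using idA' by simp
qed

lemma idB: "(\<Sum>k\<le>p. real (p choose k) * fact k * fact (p+r-k) :: real) = fact (p+r+1) / real (r+1)"
proof -
  have "(\<Sum>k\<le>p. real (p choose k) * fact k * fact (p+r-k) :: real)
      = (\<Sum>k\<le>p. real (p choose (p-k)) * fact (p-k) * fact (p+r-(p-k)))"
    unfolding atMost_atLeast0 by (subst sum.atLeastAtMost_rev) simp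
  also have "\<dots> = (\<Sum>k\<le>p. real (p choose k) * fact (r+k) * fact (p-k))"
    by (rule sum.cong) (auto simp: binomial_symmetric[symmetric] mult.commute)
  finally show ?thesis using idA by simp
qed

lemma sum_pow_card:
  assumes "finite M"
  shows "(\<Sum>U\<in>Pow M. h (card U)) = (\<Sum>k\<le>card M. real (card M choose k) * (h k :: real))"
proof -
  have "(\<Sum>U\<in>Pow M. h (card U)) = (\<Sum>k\<le>card M. \<Sum>U\<in>{U. U \<in> Pow M \<and> card U = k}. h (card U))"
    by (rule sum.group[symmetric]) (use assms in \<open>auto intro: card_mono\<close>)
  also have "\<dots> = (\<Sum>k\<le>card M. real (card M choose k) * h k)"
  proof (rule sum.cong)
    fix k assume "k \<in> {..card M}"
    have "(\<Sum>U\<in>{U. U \<in> Pow M \<and> card U = k}. h (card U)) = (\<Sum>U\<in>{U. U \<in> Pow M \<and> card U = k}. h k)"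
      by (rule sum.cong) auto
    also have "\<dots> = real (card {B. B \<subseteq> M \<and> card B = k}) * h k" by simp
    finally show "(\<Sum>U\<in>{U. U \<in> Pow M \<and> card U = k}. h (card U)) = real (card M choose k) * h k"
      using n_subsets[OF assms, of k] by simp
  qed simp
  finally show ?thesis .
qed

theorem theorem5:
  assumes "svg N W"
  shows "(\<forall>S b. S \<in> W \<and> b \<in> S \<and> yes_blocker W b \<longrightarrow>
              shapley_shubik N W b \<ge> 1 / real (card S))
       \<and> (\<forall>T b. T \<subseteq> N \<and> T \<notin> W \<and> b \<in> N - T \<and> no_blocker N W b \<longrightarrow>
              shapley_shubik N W b \<ge> 1 / real (card (N - T)))"
proof -
  have fN: "finite N" and WN: "W \<subseteq> Pow N" and
    mono: "\<And>S T. S \<in> W \<Longrightarrow> S \<subseteq> T \<Longrightarrow> T \<subseteq> N \<Longrightarrow> T \<in> W"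
    using assms unfolding svg_def by blast+
  define n where "n = card N"
  define t where "t = (\<lambda>R::'a set. fact (card R - 1) * fact (n - card R) / fact n :: real)"
  have SS: "shapley_shubik N W b = (\<Sum>R \<in> {R. R \<subseteq> N \<and> yes_decisive W b R}. t R)" for b
    unfolding shapley_shubik_def t_def n_def ..
  have lower: "shapley_shubik N W b \<ge> (\<Sum>R \<in> D. t R)"
    if "\<And>R. R \<in> D \<Longrightarrow> R \<subseteq> N \<and> yes_decisive W b R" for D b
  proof -
    have "(\<Sum>R \<in> D. t R) \<le> (\<Sum>R \<in> {R. R \<subseteq> N \<and> yes_decisive W b R}. t R)"
      by (rule sum_mono2) (use fN that in \<open>auto simp: t_def\<close>)
    then show ?thesis using SS by simp
  qed
  have P1: "shapley_shubik N W b \<ge> 1 / real (card S)"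
    if S: "S \<in> W" "b \<in> S" "yes_blocker W b" for S b
  proof -
    have SN: "S \<subseteq> N" using S WN by auto
    define a where "a = card S"
    define q where "q = card (N - S)"
    have fS: "finite S" using SN fN finite_subset by blast
    have a1: "a \<ge> 1" using S fS a_def card_0_eq by fastforce
    have nq: "n = a + q" unfolding n_def a_def q_def using SN fN
      using card_Diff_subset[OF fS SN] card_mono[OF fN SN] by simp
    let ?D = "(\<lambda>U. S \<union> U) ` Pow (N - S)"
    have dec: "R \<subseteq> N \<and> yes_decisive W b R" if "R \<in> ?D" for R
    proof -
      from that obtain U where U: "U \<subseteq> N - S" "R = S \<union> U" by auto
      have "R \<subseteq> N" using U SN by auto
      moreover have "R \<in> W" using mono[OF S(1) _ \<open>R \<subseteq> N\<close>] U by auto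
      moreover have "R - {b} \<notin> W" using S(3) unfolding yes_blocker_def by auto
      ultimately show ?thesis using U S unfolding yes_decisive_def by auto
    qed
    have inj: "inj_on (\<lambda>U. S \<union> U) (Pow (N - S))" by (rule inj_onI) auto
    have "(\<Sum>R \<in> ?D. t R) = (\<Sum>U \<in> Pow (N - S). t (S \<union> U))"
      by (rule sum.reindex[OF inj, unfolded comp_def])
    also have "\<dots> = (\<Sum>U \<in> Pow (N - S). (\<lambda>k. fact (a - 1 + k) * fact (q - k) / fact n) (card U))"
    proof (rule sum.cong)
      fix U assume "U \<in> Pow (N - S)"
      then have U: "U \<subseteq> N - S" by auto
      have fU: "finite U" using U fN finite_subset by blast
      have cU: "card (S \<union> U) = a + card U" unfolding a_def
        by (rule card_Un_disjoint) (use fS fU U in auto)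
      have "card U \<le> q" unfolding q_def using U fN by (simp add: card_mono)
      then have e: "a + card U - 1 = a - 1 + card U" "n - (a + card U) = q - card U" using a1 nq by auto
      show "t (S \<union> U) = (\<lambda>k. fact (a - 1 + k) * fact (q - k) / fact n) (card U)"
        unfolding t_def cU e by simp
    qed simp
    also have "\<dots> = (\<Sum>k\<le>q. real (q choose k) * (fact (a - 1 + k) * fact (q - k) / fact n))"
      using sum_pow_card[OF finite_Diff[OF fN, of S], of "\<lambda>k. fact (a - 1 + k) * fact (q - k) / fact n", folded q_def] .
    also have "\<dots> = (\<Sum>k\<le>q. real (q choose k) * fact (a - 1 + k) * fact (q - k)) / fact n"
      unfolding sum_divide_distrib by (rule sum.cong) (simp_all only: times_divide_eq_right mult.assoc)
    also have "\<dots> = fact (q + (a - 1) + 1) / real (a - 1 + 1) / fact n"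
      using idA[of q "a - 1"] by simp
    also have "\<dots> = 1 / real a"
    proof -
      have "q + (a - 1) + 1 = n" "a - 1 + 1 = a" using a1 nq by auto
      then show ?thesis by simp
    qed
    finally have "(\<Sum>R \<in> ?D. t R) = 1 / real a" .
    then show ?thesis using lower[of ?D b] dec a_def by simp
  qed
  have P2: "shapley_shubik N W b \<ge> 1 / real (card (N - T))"
    if T: "T \<subseteq> N" "T \<notin> W" "b \<in> N - T" "no_blocker N W b" for T b
  proof -
    define p where "p = card T"
    define m where "m = card (N - T)"
    have fT: "finite T" using T fN finite_subset by blast
    have "N - T \<noteq> {}" using T(3) by blast
    then have m1: "m \<ge> 1" using fN unfolding m_def by (simp add: Suc_leI card_gt_0_iff)
    have nm: "n = p + m" unfolding n_def p_def m_def using T fN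
      using card_Diff_subset[OF fT T(1)] card_mono[OF fN T(1)] by simp
    let ?D = "insert b ` Pow T"
    have dec: "R \<subseteq> N \<and> yes_decisive W b R" if "R \<in> ?D" for R
    proof -
      from that obtain U where U: "U \<subseteq> T" "R = insert b U" by auto
      have RN: "R \<subseteq> N" using U T by auto
      moreover have "R \<in> W" using T(4) RN U unfolding no_blocker_def by blast
      moreover have "R - {b} = U" using U T(3) by blast
      moreover have "U \<notin> W" using mono[OF _ U(1) T(1)] T(2) by auto
      ultimately show ?thesis using U unfolding yes_decisive_def by auto
    qed
    have inj: "inj_on (insert b) (Pow T)"
    proof (rule inj_onI)
      fix x y assume "x \<in> Pow T" "y \<in> Pow T" "insert b x = insert b y"
      then have "insert b x - {b} = insert b y - {b}" "b \<notin> x" "b \<notin> y" using T(3) by auto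
      then show "x = y" by simp
    qed
    have "(\<Sum>R \<in> ?D. t R) = (\<Sum>U \<in> Pow T. t (insert b U))"
      by (rule sum.reindex[OF inj, unfolded comp_def])
    also have "\<dots> = (\<Sum>U \<in> Pow T. (\<lambda>k. fact k * fact (p + (m - 1) - k) / fact n) (card U))"
    proof (rule sum.cong)
      fix U assume "U \<in> Pow T"
      then have U: "U \<subseteq> T" by auto
      have fU: "finite U" using U fT finite_subset by blast
      have cU: "card (insert b U) = Suc (card U)" using U T(3) fU by (subst card_insert_disjoint) auto
      have "card U \<le> p" unfolding p_def using U fT by (simp add: card_mono)
      then have e: "n - Suc (card U) = p + (m - 1) - card U" using m1 nm by auto
      show "t (insert b U) = (\<lambda>k. fact k * fact (p + (m - 1) - k) / fact n) (card U)"
        unfolding t_def cU e by simp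
    qed simp
    also have "\<dots> = (\<Sum>k\<le>p. real (p choose k) * (fact k * fact (p + (m - 1) - k) / fact n))"
      using sum_pow_card[OF fT, of "\<lambda>k. fact k * fact (p + (m - 1) - k) / fact n", folded p_def] .
    also have "\<dots> = (\<Sum>k\<le>p. real (p choose k) * fact k * fact (p + (m - 1) - k)) / fact n"
      unfolding sum_divide_distrib by (rule sum.cong) (simp_all only: times_divide_eq_right mult.assoc)
    also have "\<dots> = fact (p + (m - 1) + 1) / real (m - 1 + 1) / fact n"
      using idB[of p "m - 1"] by simp
    also have "\<dots> = 1 / real m"
    proof -
      have "p + (m - 1) + 1 = n" "m - 1 + 1 = m" using m1 nm by auto
      then show ?thesis by simp
    qed
    finally have "(\<Sum>R \<in> ?D. t R) = 1 / real m" .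
    then show ?thesis using lower[of ?D b] dec m_def by simp
  qed
  show ?thesis using P1 P2 by blast
qed

end
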